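(* For every $k\ge1$, $\mathrm{ABD}(k\text{-CNF})\le^{\mathrm{CV}}\mathrm{ABD}((k+1)\text{-NAE})$ and $\mathrm{P\text{-}ABD}(k\text{-CNF})\le^{\mathrm{CV}}\mathrm{P\text{-}ABD}((k+1)\text{-NAE})$.
   Context: $k\text{-CNF}$ is the constraint language of all clauses of arity $k$. For a sign pattern $s=(s_1,\dots,s_k)\in\{0,1\}^k$, let $0_s=(a_1,\dots,a_k)$ be the unique tuple with $s_i\oplus a_i=0$ for all $i$ and $1_s$ the unique tuple with $s_i\oplus a_i=1$ for all $i$, and let $R^s_{\mathrm{NAE}}=\{0,1\}^k\setminus\{0_s,1_s\}$. $k\text{-NAE}$ is the set of all relations $R^s_{\mathrm{NAE}}$ of arity $k$. An instance of $\mathrm{ABD}(\Gamma)$ is $(\mathrm{KB},H,M)$, $\mathrm{KB}$ a $\Gamma$-formula, $H,M$ sets of variables; it asks whether there is $E\subseteq H\cup\{\neg x:x\in H\}$ with $\mathrm{KB}\wedge E$ satisfiable and $\mathrm{KB}\wedge E\models m$ for all $m\in M$; $\mathrm{P\text{-}ABD}(\Gamma)$ additionally requires $E\subseteq H$. A CV-reduction $A\le^{\mathrm{CV}}B$ is a polynomial-time map $f$ with $I\in A\iff f(I)\in B$ and $|\mathrm{var}(f(I))|\le|\mathrm{var}(I)|+O(1)$. *)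

theory Defs
  imports Main
begin

text \<open>A constraint is a pair (s, xs): a sign pattern s and a tuple of variables xs
  (variables are natural numbers). An instance (KB, H, M) is a list of constraints,
  and lists of hypothesis and manifestation variables.\<close>

type_synonym constr = "bool list \<times> nat list"
type_synonym inst = "constr list \<times> nat list \<times> nat list"

text \<open>0_s is the tuple a with s_i xor a_i = 0 for all i, i.e. a = s;
  1_s is the tuple with s_i xor a_i = 1, i.e. a = map Not s.\<close>

definition zero_s :: "bool list \<Rightarrow> bool list" where "zero_s s = s"
definition one_s :: "bool list \<Rightarrow> bool list" where "one_s s = map Not s"

definition rel_CNF :: "bool list \<Rightarrow> bool list set" where
  "rel_CNF s = {a. length a = length s} - {zero_s s}"

definition rel_NAE :: "bool list \<Rightarrow> bool list set" where
  "rel_NAE s = {a. length a = length s} - {zero_s s, one_s s}"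

definition kCNF :: "nat \<Rightarrow> bool list set set" where
  "kCNF k = {rel_CNF s | s. length s = k}"
definition kNAE :: "nat \<Rightarrow> bool list set set" where
  "kNAE k = {rel_NAE s | s. length s = k}"

definition wf_inst :: "nat \<Rightarrow> inst \<Rightarrow> bool" where
  "wf_inst k I = (\<forall>(s, xs) \<in> set (fst I). length s = k \<and> length xs = k)"

definition holds :: "(bool list \<Rightarrow> bool list set) \<Rightarrow> (nat \<Rightarrow> bool) \<Rightarrow> constr \<Rightarrow> bool" where
  "holds rel \<sigma> c = (map \<sigma> (snd c) \<in> rel (fst c))"

definition models :: "(bool list \<Rightarrow> bool list set) \<Rightarrow> (nat \<Rightarrow> bool) \<Rightarrow> constr list \<Rightarrow> bool" where
  "models rel \<sigma> kb = (\<forall>c \<in> set kb. holds rel \<sigma> c)"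

text \<open>A literal (x, b) is x if b, and the negation of x otherwise.\<close>
definition lits_true :: "(nat \<Rightarrow> bool) \<Rightarrow> (nat \<times> bool) set \<Rightarrow> bool" where
  "lits_true \<sigma> E = (\<forall>(x, b) \<in> E. \<sigma> x = b)"

definition explains :: "(bool list \<Rightarrow> bool list set) \<Rightarrow> inst \<Rightarrow> (nat \<times> bool) set \<Rightarrow> bool" where
  "explains rel I E =
     ((\<exists>\<sigma>. models rel \<sigma> (fst I) \<and> lits_true \<sigma> E) \<and>
      (\<forall>\<sigma>. models rel \<sigma> (fst I) \<and> lits_true \<sigma> E \<longrightarrow> (\<forall>m \<in> set (snd (snd I)). \<sigma> m)))"

definition ABD :: "(bool list \<Rightarrow> bool list set) \<Rightarrow> inst \<Rightarrow> bool" where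
  "ABD rel I = (\<exists>E. E \<subseteq> {(x, b). x \<in> set (fst (snd I))} \<and> explains rel I E)"

definition P_ABD :: "(bool list \<Rightarrow> bool list set) \<Rightarrow> inst \<Rightarrow> bool" where
  "P_ABD rel I = (\<exists>E. E \<subseteq> {(x, True) | x. x \<in> set (fst (snd I))} \<and> explains rel I E)"

definition vars :: "inst \<Rightarrow> nat set" where
  "vars I = (\<Union>c \<in> set (fst I). set (snd c)) \<union> set (fst (snd I)) \<union> set (snd (snd I))"

fun bin :: "nat \<Rightarrow> bool list" where
  "bin n = (if n = 0 then [] else odd n # bin (n div 2))"

definition enc_bits :: "bool list \<Rightarrow> bool list" where
  "enc_bits bs = concat (map (\<lambda>b. [True, b]) bs) @ [False]"

definition enc_nat :: "nat \<Rightarrow> bool list" where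
  "enc_nat n = enc_bits (bin n)"

definition enc_list :: "('a \<Rightarrow> bool list) \<Rightarrow> 'a list \<Rightarrow> bool list" where
  "enc_list e xs = concat (map (\<lambda>x. True # e x) xs) @ [False]"

definition enc_constr :: "constr \<Rightarrow> bool list" where
  "enc_constr c = enc_bits (fst c) @ enc_list enc_nat (snd c)"

definition enc_inst :: "inst \<Rightarrow> bool list" where
  "enc_inst I = enc_list enc_constr (fst I) @ enc_list enc_nat (fst (snd I))
                @ enc_list enc_nat (snd (snd I))"

datatype dir = Lft | Rgt

text \<open>A machine (Q, S, delta): states {0..<Q} (0 start, 1 halt), tape symbols {0..<S}
  (0 blank, 1 encodes False, 2 encodes True). Configuration (q, ls, rs): ls is the part of
  the tape left of the head (reversed), rs starts at the head cell. The tape is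
  one-way infinite to the right.\<close>

type_synonym tm = "nat \<times> nat \<times> (nat \<Rightarrow> nat \<Rightarrow> nat \<times> nat \<times> dir)"
type_synonym config = "nat \<times> nat list \<times> nat list"

definition wf_tm :: "tm \<Rightarrow> bool" where
  "wf_tm M = (case M of (Q, S, \<delta>) \<Rightarrow> 2 \<le> Q \<and> 3 \<le> S \<and>
     (\<forall>q < Q. \<forall>a < S. fst (\<delta> q a) < Q \<and> fst (snd (\<delta> q a)) < S))"

definition read_sym :: "nat list \<Rightarrow> nat" where
  "read_sym rs = (case rs of [] \<Rightarrow> 0 | a # _ \<Rightarrow> a)"

definition step :: "tm \<Rightarrow> config \<Rightarrow> config" where
  "step M c = (case M of (Q, S, \<delta>) \<Rightarrow> (case c of (q, ls, rs) \<Rightarrow>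
     if q = 1 then c else
     (case \<delta> q (read_sym rs) of (q', a', d) \<Rightarrow>
       (case d of
          Rgt \<Rightarrow> (q', a' # ls, tl rs)
        | Lft \<Rightarrow> (case ls of [] \<Rightarrow> (q', [], a' # tl rs)
                           | b # ls' \<Rightarrow> (q', ls', b # a' # tl rs))))))"

definition run :: "tm \<Rightarrow> nat \<Rightarrow> bool list \<Rightarrow> config" where
  "run M t x = (step M ^^ t) (0, [], map (\<lambda>b. if b then 2 else 1) x)"

definition tape_output :: "config \<Rightarrow> bool list" where
  "tape_output c = (case c of (q, ls, rs) \<Rightarrow>
     map (\<lambda>a. a = 2) (takeWhile (\<lambda>a. a = 1 \<or> a = 2) (rev ls @ rs)))"

definition poly_time_on :: "bool list set \<Rightarrow> (bool list \<Rightarrow> bool list) \<Rightarrow> bool" where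
  "poly_time_on D F = (\<exists>M c d. wf_tm M \<and>
     (\<forall>x \<in> D. \<exists>t \<le> c * (length x + 1) ^ d. fst (run M t x) = 1 \<and> tape_output (run M t x) = F x))"

definition cv_reduces ::
  "(inst \<Rightarrow> bool) \<Rightarrow> (inst \<Rightarrow> bool) \<Rightarrow> (inst \<Rightarrow> bool) \<Rightarrow> (inst \<Rightarrow> bool) \<Rightarrow> bool" where
  "cv_reduces wfA A wfB B = (\<exists>g :: inst \<Rightarrow> inst. \<exists>c :: nat.
     (\<exists>F. poly_time_on (enc_inst ` {I. wfA I}) F \<and> (\<forall>I. wfA I \<longrightarrow> F (enc_inst I) = enc_inst (g I))) \<and>
     (\<forall>I. wfA I \<longrightarrow> wfB (g I) \<and> (A I \<longleftrightarrow> B (g I)) \<and>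
            card (vars (g I)) \<le> card (vars I) + c))"

end

theory Submission
  imports Defs
begin


declare bin.simps[simp del]

definition r :: "nat \<Rightarrow> nat" where "r x = 2 * x + 1"

definition tr :: "nat \<Rightarrow> bool \<Rightarrow> nat" where
 "tr d b = (if d = 0 then (if b then 1 else 6)
   else if d = 1 then (if b then 2 else 3)
   else if d = 2 then 1
   else if d = 3 then (if b then 4 else 0)
   else if d = 4 then (if b then 5 else 3)
   else if d = 5 then 4
   else if d = 6 then (if b then 7 else 9)
   else if d = 7 then (if b then 8 else 6)
   else if d = 8 then 7
   else if d = 9 then (if b then 10 else 12)
   else if d = 10 then (if b then 11 else 9)
   else if d = 11 then 10 else 12)"

definition extra :: "nat \<Rightarrow> constr" where
 "extra k = (replicate (k+1) False, replicate k 0 @ [2])"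

definition outp :: "nat \<Rightarrow> nat \<Rightarrow> bool \<Rightarrow> bool list" where
 "outp k d b = (if d = 0 then (if b then [True] else True # enc_constr (extra k) @ [False])
   else if d = 1 then (if b then [True] else [True, False, False])
   else if d = 2 then [b]
   else if d = 3 then (if b then [True, True, True] else [True, False, False])
   else if d = 4 then (if b then [True] else [False])
   else if d = 5 then [b]
   else if d = 6 \<or> d = 9 then (if b then [True, True, True] else True # enc_nat 2 @ [False])
   else if d = 7 \<or> d = 10 then (if b then [True] else [False])
   else if d = 8 \<or> d = 11 then [b]
   else [False])"

definition KK :: "nat \<Rightarrow> nat" where "KK k = length (enc_constr (extra k)) + 10"

lemma tr_lt: "tr d b < 13"
  unfolding tr_def by auto

lemma outp_ne: "outp k d b \<noteq> []"
  unfolding outp_def by auto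

lemma enc_nat2: "enc_nat 2 = [True, False, True, True, False]"
proof -
  have "bin 2 = [False, True]" by (simp add: bin.simps)
  then show ?thesis by (simp add: enc_nat_def enc_bits_def)
qed

lemma outp_len: "length (outp k d b) \<le> KK k"
  unfolding outp_def KK_def by (auto simp: enc_nat2)

fun lcode :: "bool list \<Rightarrow> nat" where
  "lcode [] = 1"
| "lcode (b # w) = 2 * lcode w + (if b then 1 else 0)"

fun ldec :: "nat \<Rightarrow> bool list" where
  "ldec n = (if n \<le> 1 then [] else odd n # ldec (n div 2))"

declare ldec.simps[simp del]

lemma lcode_ge: "lcode w \<ge> 1"
  by (induction w) auto

lemma ldec_lcode[simp]: "ldec (lcode w) = w"
proof (induction w)
  case Nil then show ?case by (simp add: ldec.simps)
next
  case (Cons b w)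
  have "lcode (b # w) > 1" using lcode_ge[of w] by auto
  then show ?case using Cons by (subst ldec.simps) auto
qed

lemma lcode_lt: "lcode w < 2 ^ (length w + 1)"
  by (induction w) auto

definition sy :: "bool \<Rightarrow> nat" where "sy b = (if b then 2 else 1)"

definition pk :: "bool list \<Rightarrow> bool \<Rightarrow> nat" where
  "pk w f = 3 + 2 * lcode w + (if f then 1 else 0)"

definition bsq :: "bool list \<Rightarrow> bool \<Rightarrow> nat" where
  "bsq w f = 16 + 2 * lcode w + (if f then 1 else 0)"

definition QB :: "nat \<Rightarrow> nat" where "QB k = 18 + 2 * 2 ^ (KK k + 1)"
definition SB :: "nat \<Rightarrow> nat" where "SB k = 5 + 2 * 2 ^ (KK k + 1)"

definition decw :: "nat \<Rightarrow> bool list" where "decw a = ldec ((a - 3) div 2)"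
definition decf :: "nat \<Rightarrow> bool" where "decf a = odd (a - 3)"
definition decQ :: "nat \<Rightarrow> bool list" where "decQ a = ldec ((a - 16) div 2)"
definition decg :: "nat \<Rightarrow> bool" where "decg a = odd (a - 16)"

definition draw :: "nat \<Rightarrow> nat \<Rightarrow> nat \<Rightarrow> nat \<times> nat \<times> dir" where
 "draw k q a =
  (if q = 0 \<or> (3 \<le> q \<and> q < 16) then
     (let d = (if q = 0 then 0 else q - 3) in
      if a = 1 \<or> a = 2 then (3 + tr d (a = 2), pk (outp k d (a = 2)) (q = 0), Rgt) else (2, 0, Lft))
   else if q = 2 then
     (if 3 \<le> a then (let w = decw a; f = decf a in
         if tl w = [] then (if f then 1 else 2, sy (hd w), if f then Rgt else Lft)
         else (bsq (tl w) f, sy (hd w), Rgt))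
      else (2, a, Lft))
   else if 16 \<le> q then (let Q = decQ q; f = decg q in
      if a = 1 \<or> a = 2 then (bsq (tl Q @ [a = 2]) f, sy (hd Q), Rgt)
      else (if tl Q = [] then (if f then 1 else 2) else bsq (tl Q) f, sy (hd Q), Rgt))
   else (1, 0, Rgt))"

definition dl :: "nat \<Rightarrow> nat \<Rightarrow> nat \<Rightarrow> nat \<times> nat \<times> dir" where
 "dl k q a = (case draw k q a of (q', a', d) \<Rightarrow> if q' < QB k \<and> a' < SB k then (q', a', d) else (1, 0, Rgt))"

definition MM :: "nat \<Rightarrow> tm" where "MM k = (QB k, SB k, dl k)"

lemma wf_MM: "wf_tm (MM k)"
  unfolding wf_tm_def MM_def dl_def QB_def SB_def by (auto split: prod.splits)

lemma pow_K: "length w \<le> KK k \<Longrightarrow> lcode w < 2 ^ (KK k + 1)"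
proof -
  assume "length w \<le> KK k"
  then have "(2::nat) ^ (length w + 1) \<le> 2 ^ (KK k + 1)" by (intro power_increasing) auto
  then show ?thesis using lcode_lt[of w] by linarith
qed

lemma pk_lt: "length w \<le> KK k \<Longrightarrow> pk w f < SB k"
  using pow_K[of w k] unfolding pk_def SB_def by auto

lemma bsq_lt: "length w \<le> KK k \<Longrightarrow> bsq w f < QB k"
  using pow_K[of w k] unfolding bsq_def QB_def by auto

lemma sy_lt: "sy b < SB k" unfolding sy_def SB_def by auto
lemma small_lt: "n < 18 \<Longrightarrow> n < QB k" unfolding QB_def by auto
lemma small_lt2: "n < 5 \<Longrightarrow> n < SB k" unfolding SB_def by auto

lemma dl_eq: "draw k q a = (q', a', d) \<Longrightarrow> q' < QB k \<Longrightarrow> a' < SB k \<Longrightarrow> dl k q a = (q', a', d)"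
  unfolding dl_def by auto

lemma pk_dec[simp]: "decw (pk w f) = w" "decf (pk w f) = f" "3 \<le> pk w f"
  unfolding pk_def decw_def decf_def by auto

lemma bsq_dec[simp]: "decQ (bsq w f) = w" "decg (bsq w f) = f" "16 \<le> bsq w f"
  unfolding bsq_def decQ_def decg_def by auto

lemma bsq_ne[simp]: "bsq w f \<noteq> 0" "bsq w f \<noteq> Suc 0" "bsq w f \<noteq> 2" "\<not> bsq w f < 16" "\<not> bsq w f < 3"
  unfolding bsq_def by auto
lemma pk_ne[simp]: "pk w f \<noteq> 0" "pk w f \<noteq> Suc 0" "pk w f \<noteq> 2"
  unfolding pk_def by auto
lemma sy_one[simp]: "(sy z = Suc 0) = (\<not> z)" unfolding sy_def by auto

lemma tr_lt2: "3 + tr d b < QB k" using tr_lt[of d b] small_lt[of "3 + tr d b" k] by auto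
lemma sy_F[simp]: "sy False = 1" and sy_T[simp]: "sy True = 2" unfolding sy_def by auto

lemma sy_simps[simp]: "sy b = 1 \<or> sy b = 2" "(sy b = 2) = b" "\<not> 3 \<le> sy b" "sy b \<noteq> 0"
  unfolding sy_def by auto

lemma step_MM: "q \<noteq> 1 \<Longrightarrow> draw k q (read_sym rs) = (q', a', d) \<Longrightarrow> q' < QB k \<Longrightarrow> a' < SB k \<Longrightarrow>
  step (MM k) (q, ls, rs) = (case d of Rgt \<Rightarrow> (q', a' # ls, tl rs)
          | Lft \<Rightarrow> (case ls of [] \<Rightarrow> (q', [], a' # tl rs) | b # ls' \<Rightarrow> (q', ls', b # a' # tl rs)))"
  using dl_eq[of k q "read_sym rs" q' a' d] unfolding step_def MM_def by auto

lemma S_A0: "step (MM k) (0, L, sy b # rs) = (3 + tr 0 b, pk (outp k 0 b) True # L, rs)"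
  by (subst step_MM[where q'="3 + tr 0 b" and a'="pk (outp k 0 b) True" and d=Rgt])
     (auto simp: draw_def Let_def tr_lt2 read_sym_def tr_lt small_lt pk_lt outp_len)

lemma S_A: "d < 13 \<Longrightarrow> step (MM k) (3 + d, L, sy b # rs) = (3 + tr d b, pk (outp k d b) False # L, rs)"
  by (subst step_MM[where q'="3 + tr d b" and a'="pk (outp k d b) False" and d=Rgt])
     (auto simp: draw_def Let_def tr_lt2 read_sym_def tr_lt small_lt pk_lt outp_len)

lemma S_Aend: "d < 13 \<Longrightarrow> step (MM k) (3 + d, a # L, []) = (2, L, [a, 0])"
  by (subst step_MM[where q'="2" and a'="0" and d=Lft])
     (auto simp: draw_def Let_def tr_lt2 read_sym_def small_lt small_lt2)

lemma S_L1: "step (MM k) (2, p # L, pk [b] False # rs) = (2, L, p # sy b # rs)"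
  by (subst step_MM[where q'="2" and a'="sy b" and d=Lft])
     (auto simp: draw_def Let_def tr_lt2 read_sym_def small_lt sy_lt)

lemma S_L1f: "step (MM k) (2, L, pk [b] True # rs) = (1, sy b # L, rs)"
  by (subst step_MM[where q'="1" and a'="sy b" and d=Rgt])
     (auto simp: draw_def Let_def tr_lt2 read_sym_def small_lt sy_lt)

lemma S_Lm: "w' \<noteq> [] \<Longrightarrow> length (b # w') \<le> KK k \<Longrightarrow>
   step (MM k) (2, L, pk (b # w') f # rs) = (bsq w' f, sy b # L, rs)"
  by (subst step_MM[where q'="bsq w' f" and a'="sy b" and d=Rgt])
     (auto simp: draw_def Let_def tr_lt2 read_sym_def bsq_lt sy_lt)

lemma S_Lp: "step (MM k) (2, y # L, sy z # rs) = (2, L, y # sy z # rs)"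
  by (subst step_MM[where q'="2" and a'="sy z" and d=Lft])
     (auto simp: draw_def Let_def tr_lt2 read_sym_def small_lt sy_lt)

lemma S_Lb: "step (MM k) (2, y # L, []) = (2, L, [y, 0])"
  by (subst step_MM[where q'="2" and a'="0" and d=Lft])
     (auto simp: draw_def Let_def tr_lt2 read_sym_def small_lt small_lt2)

lemma S_Sp: "Q \<noteq> [] \<Longrightarrow> length Q \<le> KK k \<Longrightarrow>
   step (MM k) (bsq Q f, L, sy z # rs) = (bsq (tl Q @ [z]) f, sy (hd Q) # L, rs)"
  by (subst step_MM[where q'="bsq (tl Q @ [z]) f" and a'="sy (hd Q)" and d=Rgt])
     (auto simp: draw_def Let_def tr_lt2 read_sym_def bsq_lt sy_lt)

lemma S_Sb: "Q \<noteq> [] \<Longrightarrow> length Q \<le> KK k \<Longrightarrow> read_sym rs = 0 \<Longrightarrow>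
   step (MM k) (bsq Q f, L, rs) = (if tl Q = [] then (if f then 1 else 2) else bsq (tl Q) f, sy (hd Q) # L, tl rs)"
  by (subst step_MM[where q'="if tl Q = [] then (if f then 1 else 2) else bsq (tl Q) f" and a'="sy (hd Q)" and d=Rgt])
     (auto simp: draw_def Let_def tr_lt2 bsq_lt sy_lt small_lt)


fun chunks :: "nat \<Rightarrow> nat \<Rightarrow> bool list \<Rightarrow> bool list list" where
  "chunks k d [] = []"
| "chunks k d (b # bs) = outp k d b # chunks k (tr d b) bs"

fun tr_st :: "nat \<Rightarrow> bool list \<Rightarrow> nat" where
  "tr_st d [] = d"
| "tr_st d (b # bs) = tr_st (tr d b) bs"

lemma chunks_len[simp]: "length (chunks k d xs) = length xs"
  by (induction xs arbitrary: d) auto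

lemma chunks_ok: "c \<in> set (chunks k d xs) \<Longrightarrow> c \<noteq> [] \<and> length c \<le> KK k"
  by (induction xs arbitrary: d) (auto simp: outp_ne outp_len)

lemma chunks_total: "length (concat (chunks k d xs)) \<le> KK k * length xs"
proof (induction xs arbitrary: d)
  case Nil then show ?case by simp
next
  case (Cons b xs)
  have "length (outp k d b) + length (concat (chunks k (tr d b) xs)) \<le> KK k + KK k * length xs"
    by (rule add_mono[OF outp_len Cons.IH])
  then show ?case by simp
qed

lemma phaseA: "d < 13 \<Longrightarrow> (step (MM k) ^^ length xs) (3 + d, L, map sy xs) =
   (3 + tr_st d xs, rev (map (\<lambda>w. pk w False) (chunks k d xs)) @ L, [])"
proof (induction xs arbitrary: d L)
  case Nil then show ?case by simp
next
  case (Cons b xs)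
  show ?case using Cons.IH[of "tr d b" "pk (outp k d b) False # L"] Cons.prems
    by (simp add: funpow_Suc_right S_A tr_lt del: funpow.simps)
qed

lemma shift_plain: "Q \<noteq> [] \<Longrightarrow> length Q \<le> KK k \<Longrightarrow>
  (step (MM k) ^^ length Os) (bsq Q f, L, map sy Os @ R) =
  (bsq (drop (length Os) (Q @ Os)) f, rev (map sy (take (length Os) (Q @ Os))) @ L, R)"
proof (induction Os arbitrary: Q L)
  case Nil then show ?case by simp
next
  case (Cons z Os)
  obtain q Q' where Q: "Q = q # Q'" using Cons.prems by (cases Q) auto
  have "(step (MM k) ^^ length (z # Os)) (bsq Q f, L, map sy (z # Os) @ R) =
     (step (MM k) ^^ length Os) (bsq (Q' @ [z]) f, sy q # L, map sy Os @ R)"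
    using Cons.prems Q by (simp add: funpow_Suc_right S_Sp del: funpow.simps)
  also have "\<dots> = (bsq (drop (length Os) ((Q' @ [z]) @ Os)) f, rev (map sy (take (length Os) ((Q' @ [z]) @ Os))) @ sy q # L, R)"
    using Cons.prems Q by (intro Cons.IH) auto
  finally show ?case using Q by simp
qed

lemma read_rep: "read_sym (replicate j 0) = 0"
  by (cases j) (auto simp: read_sym_def)

lemma shift_blank: "Q \<noteq> [] \<Longrightarrow> length Q \<le> KK k \<Longrightarrow>
  (step (MM k) ^^ length Q) (bsq Q f, L, replicate j 0) =
  (if f then 1 else 2, rev (map sy Q) @ L, replicate (j - length Q) 0)"
proof (induction Q arbitrary: L j)
  case Nil then show ?case by simp
next
  case (Cons q Q)
  show ?case
  proof (cases "Q = []")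
    case True
    then show ?thesis using Cons.prems S_Sb[of "[q]" k, OF _ _ read_rep]
      by (simp add: tl_replicate)
  next
    case False
    have "(step (MM k) ^^ length (q # Q)) (bsq (q # Q) f, L, replicate j 0) =
      (step (MM k) ^^ length Q) (bsq Q f, sy q # L, replicate (j - 1) 0)"
      using Cons.prems False S_Sb[of "q # Q" k, OF _ _ read_rep]
      by (simp add: funpow_Suc_right tl_replicate del: funpow.simps)
    also have "\<dots> = (if f then 1 else 2, rev (map sy Q) @ sy q # L, replicate (j - 1 - length Q) 0)"
      using Cons.prems False by (intro Cons.IH) auto
    finally show ?thesis by simp
  qed
qed

lemma bleft: "zs \<noteq> [] \<Longrightarrow> (step (MM k) ^^ length ys) (2, rev (map sy ys) @ L, map sy zs @ [0]) =
   (2, L, map sy (ys @ zs) @ [0])"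
proof (induction ys arbitrary: L)
  case Nil then show ?case by simp
next
  case (Cons y ys)
  obtain z zs' where e: "ys @ zs = z # zs'" using Cons.prems by (cases "ys @ zs") auto
  have "(step (MM k) ^^ length (y # ys)) (2, rev (map sy (y # ys)) @ L, map sy zs @ [0]) =
     step (MM k) ((step (MM k) ^^ length ys) (2, rev (map sy ys) @ (sy y # L), map sy zs @ [0]))"
    by simp
  also have "\<dots> = step (MM k) (2, sy y # L, map sy (ys @ zs) @ [0])"
    using Cons by simp
  also have "\<dots> = (2, L, map sy ((y # ys) @ zs) @ [0])"
    using e by (simp add: S_Lp)
  finally show ?case .
qed

definition reach_le :: "nat \<Rightarrow> config \<Rightarrow> config \<Rightarrow> nat \<Rightarrow> bool" where
  "reach_le k c c' N = (\<exists>t\<le>N. (step (MM k) ^^ t) c = c')"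

lemma reach_pow: "(step (MM k) ^^ n) c = c' \<Longrightarrow> reach_le k c c' n"
  unfolding reach_le_def by auto

lemma reach_step: "step (MM k) c = c' \<Longrightarrow> reach_le k c c' 1"
  using reach_pow[where n=1 and k=k and c=c and c'=c'] by simp

lemma reach_trans: "reach_le k c1 c2 N1 \<Longrightarrow> reach_le k c2 c3 N2 \<Longrightarrow> reach_le k c1 c3 (N1 + N2)"
  unfolding reach_le_def
proof -
  assume "\<exists>t\<le>N1. (step (MM k) ^^ t) c1 = c2" "\<exists>t\<le>N2. (step (MM k) ^^ t) c2 = c3"
  then obtain t1 t2 where "t1 \<le> N1" "(step (MM k) ^^ t1) c1 = c2" "t2 \<le> N2" "(step (MM k) ^^ t2) c2 = c3"
    by blast
  then show "\<exists>t\<le>N1 + N2. (step (MM k) ^^ t) c1 = c3"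
    by (intro exI[of _ "t2 + t1"]) (auto simp: funpow_add)
qed

lemma reach_mono: "reach_le k c c' N \<Longrightarrow> N \<le> N' \<Longrightarrow> reach_le k c c' N'"
  unfolding reach_le_def using le_trans by blast

lemma multi_tail:
  assumes "w' \<noteq> []" "length (b # w') \<le> KK k"
  shows "reach_le k (bsq w' f, sy b # L, map sy Os @ [0])
     (if f then 1 else 2, rev (map sy (b # w' @ Os)) @ L, []) (length Os + length w')"
proof -
  let ?Q = "drop (length Os) (w' @ Os)"
  have q3: "length ?Q = length w'" by simp
  have q: "?Q \<noteq> []" "length ?Q \<le> KK k" "length ?Q = length w'" using assms q3
    by (metis length_0_conv, simp, simp)
  have "reach_le k (bsq w' f, sy b # L, map sy Os @ [0])
     (bsq ?Q f, rev (map sy (take (length Os) (w' @ Os))) @ sy b # L, [0]) (length Os)"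
    using assms by (intro reach_pow shift_plain) auto
  moreover have "reach_le k (bsq ?Q f, rev (map sy (take (length Os) (w' @ Os))) @ sy b # L, replicate 1 0)
     (if f then 1 else 2, rev (map sy ?Q) @ rev (map sy (take (length Os) (w' @ Os))) @ sy b # L, replicate (1 - length ?Q) 0) (length w')"
    using q by (intro reach_pow) (metis shift_blank)
  ultimately have R: "reach_le k (bsq w' f, sy b # L, map sy Os @ [0])
     (if f then 1 else 2, rev (map sy ?Q) @ rev (map sy (take (length Os) (w' @ Os))) @ sy b # L, replicate (1 - length ?Q) 0) (length Os + length w')"
    using reach_trans by simp
  have E: "rev (map sy ?Q) @ rev (map sy (take (length Os) (w' @ Os))) @ sy b # L = rev (map sy (b # w' @ Os)) @ L"
  proof -
    have "take (length Os) (w' @ Os) @ ?Q = w' @ Os" by (rule append_take_drop_id)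
    then have "rev (map sy ?Q) @ rev (map sy (take (length Os) (w' @ Os))) = rev (map sy (w' @ Os))"
      by (metis map_append rev_append)
    then show ?thesis by simp
  qed
  have Z: "replicate (1 - length ?Q) (0::nat) = []"
  proof -
    have "length ?Q \<ge> 1" using q(1) by (metis length_greater_0_conv One_nat_def Suc_leI)
    then show ?thesis by (simp only: diff_is_0_eq[THEN iffD2] replicate_0)
  qed
  show ?thesis using R by (simp only: E Z)
qed

lemma B_step:
  assumes "w \<noteq> []" "length w \<le> KK k"
  shows "reach_le k (2, p' # L, pk w False # map sy Os @ [0]) (2, L, p' # map sy (w @ Os) @ [0])
     (2 * (length w + length Os) + 3)"
proof (cases "tl w = []")
  case True
  then obtain b where w: "w = [b]" using assms by (cases w) auto
  show ?thesis using w by (intro reach_mono[OF reach_step]) (auto simp: S_L1)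
next
  case False
  obtain b w' where w: "w = b # w'" using assms by (cases w) auto
  have w': "w' \<noteq> []" using False w by simp
  define Y where "Y = b # w' @ Os"
  have Y: "Y = butlast Y @ [last Y]" "Y \<noteq> []" "length Y = 1 + length w' + length Os" unfolding Y_def by auto
  have "reach_le k (2, p' # L, pk w False # map sy Os @ [0]) (bsq w' False, sy b # p' # L, map sy Os @ [0]) 1"
    using w w' assms by (intro reach_step) (simp add: S_Lm)
  moreover have "reach_le k (bsq w' False, sy b # p' # L, map sy Os @ [0]) (2, rev (map sy Y) @ p' # L, []) (length Os + length w')"
    using multi_tail[of w' b k False "p' # L" Os] w w' assms unfolding Y_def by simp
  moreover have "reach_le k (2, rev (map sy Y) @ p' # L, []) (2, rev (map sy (butlast Y)) @ p' # L, map sy [last Y] @ [0]) 1"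
  proof -
    have "rev (map sy Y) @ p' # L = sy (last Y) # (rev (map sy (butlast Y)) @ p' # L)"
      by (subst Y(1)) simp
    then show ?thesis by (intro reach_step) (simp add: S_Lb)
  qed
  moreover have "reach_le k (2, rev (map sy (butlast Y)) @ p' # L, map sy [last Y] @ [0]) (2, p' # L, map sy Y @ [0]) (length (butlast Y))"
    by (intro reach_pow) (metis Y(1) bleft not_Cons_self2)
  moreover have "reach_le k (2, p' # L, map sy Y @ [0]) (2, L, p' # map sy Y @ [0]) 1"
    unfolding Y_def by (intro reach_step) (simp add: S_Lp)
  ultimately have "reach_le k (2, p' # L, pk w False # map sy Os @ [0]) (2, L, p' # map sy Y @ [0])
     (1 + (length Os + length w') + 1 + length (butlast Y) + 1)"
    by (meson reach_trans)
  then have "reach_le k (2, p' # L, pk w False # map sy Os @ [0]) (2, L, p' # map sy (w @ Os) @ [0])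
     (1 + (length Os + length w') + 1 + length (butlast Y) + 1)" using w unfolding Y_def by simp
  then show ?thesis by (rule reach_mono) (simp add: w Y_def)
qed

lemma tape_sy: "tape_output (q, rev (map sy Y), map sy Z @ R) = Y @ Z" if "R = [] \<or> R = [0]"
  using that by (auto simp: tape_output_def takeWhile_append o_def)

lemma tape_sy': "tape_output (q, rev (map sy Y), []) = Y"
  using tape_sy[where q=q and Y=Y and Z="[]" and R="[]"] by simp

lemma B_first:
  assumes "w \<noteq> []" "length w \<le> KK k"
  shows "\<exists>C. reach_le k (2, [], pk w True # map sy Os @ [0]) C (2 * (length w + length Os) + 3)
      \<and> fst C = 1 \<and> tape_output C = w @ Os"
proof (cases "tl w = []")
  case True
  then obtain b where w: "w = [b]" using assms by (cases w) auto
  have "reach_le k (2, [], pk w True # map sy Os @ [0]) (1, rev (map sy [b]), map sy Os @ [0]) (2 * (length w + length Os) + 3)"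
    using w by (intro reach_mono[OF reach_step]) (auto simp: S_L1f)
  then show ?thesis using w tape_sy[where q=1 and Y="[b]" and Z=Os and R="[0]"] by fastforce
next
  case False
  obtain b w' where w: "w = b # w'" using assms by (cases w) auto
  have w': "w' \<noteq> []" using False w by simp
  have "reach_le k (2, [], pk w True # map sy Os @ [0]) (bsq w' True, sy b # [], map sy Os @ [0]) 1"
    using w w' assms by (intro reach_step) (simp add: S_Lm)
  moreover have "reach_le k (bsq w' True, sy b # [], map sy Os @ [0]) (1, rev (map sy (b # w' @ Os)) @ [], []) (length Os + length w')"
    using multi_tail[of w' b k True "[]" Os] w w' assms by simp
  ultimately have "reach_le k (2, [], pk w True # map sy Os @ [0]) (1, rev (map sy (b # w' @ Os)) @ [], []) (1 + (length Os + length w'))"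
    by (rule reach_trans)
  then have "reach_le k (2, [], pk w True # map sy Os @ [0]) (1, rev (map sy (b # w' @ Os)), []) (2 * (length w + length Os) + 3)"
  proof -
    assume X0: "reach_le k (2, [], pk w True # map sy Os @ [0]) (1, rev (map sy (b # w' @ Os)) @ [], []) (1 + (length Os + length w'))"
    have X: "reach_le k (2, [], pk w True # map sy Os @ [0]) (1, rev (map sy (b # w' @ Os)), []) (1 + (length Os + length w'))"
      using X0 by (simp only: append_Nil2)
    have "1 + (length Os + length w') \<le> 2 * (length w + length Os) + 3" using w by simp
    then show ?thesis using X reach_mono by blast
  qed
  then show ?thesis using w tape_sy'[of 1 "b # w' @ Os"] by fastforce
qed


lemma B_all:
  assumes "\<forall>x\<in>set (c1 # cs @ [c]). x \<noteq> [] \<and> length x \<le> KK k"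
    and "length (concat (c1 # cs @ [c])) + length Os \<le> T"
  shows "\<exists>C. reach_le k (2, rev (pk c1 True # map (\<lambda>x. pk x False) cs), pk c False # map sy Os @ [0]) C
      ((length cs + 2) * (2 * T + 3)) \<and> fst C = 1 \<and> tape_output C = concat (c1 # cs @ [c]) @ Os"
  using assms
proof (induction cs arbitrary: c Os rule: rev_induct)
  case Nil
  have s1: "reach_le k (2, [pk c1 True], pk c False # map sy Os @ [0]) (2, [], pk c1 True # map sy (c @ Os) @ [0])
     (2 * T + 3)"
    by (rule reach_mono[OF B_step]) (use Nil.prems in auto)
  obtain C where C: "reach_le k (2, [], pk c1 True # map sy (c @ Os) @ [0]) C (2 * (length c1 + length (c @ Os)) + 3)"
    "fst C = 1" "tape_output C = c1 @ c @ Os"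
    using B_first[of c1 k "c @ Os"] Nil.prems by auto
  have "reach_le k (2, [], pk c1 True # map sy (c @ Os) @ [0]) C (2 * T + 3)"
    by (rule reach_mono[OF C(1)]) (use Nil.prems in auto)
  then have "reach_le k (2, [pk c1 True], pk c False # map sy Os @ [0]) C ((2 * T + 3) + (2 * T + 3))"
    using s1 reach_trans by blast
  then show ?case using C by (intro exI[of _ C]) (auto simp: algebra_simps)
next
  case (snoc c' cs)
  have s1: "reach_le k (2, pk c' False # rev (pk c1 True # map (\<lambda>x. pk x False) cs), pk c False # map sy Os @ [0])
     (2, rev (pk c1 True # map (\<lambda>x. pk x False) cs), pk c' False # map sy (c @ Os) @ [0]) (2 * T + 3)"
    by (rule reach_mono[OF B_step]) (use snoc.prems in auto)
  obtain C where C: "reach_le k (2, rev (pk c1 True # map (\<lambda>x. pk x False) cs), pk c' False # map sy (c @ Os) @ [0]) C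
      ((length cs + 2) * (2 * T + 3))" "fst C = 1" "tape_output C = concat (c1 # cs @ [c']) @ c @ Os"
    using snoc.IH[of c' "c @ Os"] snoc.prems by auto
  have "reach_le k (2, pk c' False # rev (pk c1 True # map (\<lambda>x. pk x False) cs), pk c False # map sy Os @ [0]) C
     ((2 * T + 3) + (length cs + 2) * (2 * T + 3))"
    using s1 C(1) reach_trans by blast
  then show ?case using C by (intro exI[of _ C]) (auto simp: algebra_simps)
qed

lemma run_eq: "run M t x = (step M ^^ t) (0, [], map sy x)"
proof -
  have "sy = (\<lambda>b. if b then 2 else 1)" by (rule ext) (simp add: sy_def)
  then show ?thesis unfolding run_def by simp
qed

lemma tr_st_lt: "d < 13 \<Longrightarrow> tr_st d xs < 13"
  by (induction xs arbitrary: d) (auto simp: tr_lt)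

lemma tm_main:
  assumes "x \<noteq> []"
  shows "\<exists>t \<le> (2 * KK k + 6) * (length x + 1) ^ 2. fst (run (MM k) t x) = 1 \<and>
           tape_output (run (MM k) t x) = concat (chunks k 0 x)"
proof -
  obtain x1 xs where x: "x = x1 # xs" using assms by (cases x) auto
  define c1 where "c1 = outp k 0 x1"
  define d where "d = tr 0 x1"
  have d: "d < 13" unfolding d_def by (rule tr_lt)
  define T where "T = length (concat (chunks k 0 x))"
  have T: "T \<le> KK k * length x" unfolding T_def by (rule chunks_total)
  have ch: "chunks k 0 x = c1 # chunks k d xs" unfolding x c1_def d_def by simp
  have ok: "\<forall>c\<in>set (chunks k 0 x). c \<noteq> [] \<and> length c \<le> KK k" using chunks_ok by blast
  have s0: "reach_le k (0, [], map sy x) (3 + d, [pk c1 True], map sy xs) 1"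
    unfolding x c1_def d_def by (intro reach_step) (simp add: S_A0)
  have s1: "reach_le k (3 + d, [pk c1 True], map sy xs)
     (3 + tr_st d xs, rev (map (\<lambda>w. pk w False) (chunks k d xs)) @ [pk c1 True], []) (length xs)"
    by (intro reach_pow phaseA d)
  have "\<exists>C. reach_le k (0, [], map sy x) C ((2 * KK k + 6) * (length x + 1) ^ 2) \<and> fst C = 1 \<and>
            tape_output C = concat (chunks k 0 x)"
  proof (cases "xs = []")
    case True
    have s2: "reach_le k (3 + tr_st d xs, rev (map (\<lambda>w. pk w False) (chunks k d xs)) @ [pk c1 True], [])
      (2, [], pk c1 True # map sy [] @ [0]) 1"
      using True d by (intro reach_step) (simp add: S_Aend)
    obtain C where C: "reach_le k (2, [], pk c1 True # map sy [] @ [0]) C (2 * (length c1 + length ([]::bool list)) + 3)"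
      "fst C = 1" "tape_output C = c1 @ []"
      using B_first[of c1 k "[]"] ok ch by auto
    have "reach_le k (0, [], map sy x) C (1 + length xs + 1 + (2 * (length c1 + length ([]::bool list)) + 3))"
      using reach_trans[OF reach_trans[OF reach_trans[OF s0 s1] s2] C(1)] .
    moreover have "1 + length xs + 1 + (2 * (length c1 + length ([]::bool list)) + 3) \<le> (2 * KK k + 6) * (length x + 1) ^ 2"
    proof -
      have "length c1 \<le> KK k" using ok ch by auto
      then show ?thesis using True x by (simp add: power2_eq_square algebra_simps)
    qed
    ultimately show ?thesis using C ch True by (intro exI[of _ C]) (auto intro: reach_mono)
  next
    case False
    then obtain cs c where csc: "chunks k d xs = cs @ [c]"
      by (metis chunks_len length_0_conv rev_exhaust)
    have lcs: "length cs + 1 = length xs" using arg_cong[OF csc, of length] by simp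
    have s2: "reach_le k (3 + tr_st d xs, rev (map (\<lambda>w. pk w False) (chunks k d xs)) @ [pk c1 True], [])
      (2, rev (pk c1 True # map (\<lambda>x. pk x False) cs), pk c False # map sy [] @ [0]) 1"
      using tr_st_lt[OF d, of xs] csc by (intro reach_step) (simp add: S_Aend)
    obtain C where C: "reach_le k (2, rev (pk c1 True # map (\<lambda>x. pk x False) cs), pk c False # map sy [] @ [0]) C
        ((length cs + 2) * (2 * T + 3))" "fst C = 1" "tape_output C = concat (c1 # cs @ [c]) @ []"
      using B_all[of c1 cs c k "[]" T] ok ch csc T_def by auto
    have "reach_le k (0, [], map sy x) C (1 + length xs + 1 + (length cs + 2) * (2 * T + 3))"
      using reach_trans[OF reach_trans[OF reach_trans[OF s0 s1] s2] C(1)] .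
    moreover have "1 + length xs + 1 + (length cs + 2) * (2 * T + 3) \<le> (2 * KK k + 6) * (length x + 1) ^ 2"
    proof -
      define n where "n = length x"
      have lx: "length x = Suc (length xs)" using x by simp
      have n: "length xs + 1 = n" "length cs + 2 = n" using lx lcs unfolding n_def by (simp_all)
      have "2 * T + 3 \<le> (2 * KK k + 3) * (n + 1)" using T unfolding n_def by (simp add: algebra_simps)
      then have A: "(n + 1) * (2 * T + 3) \<le> (n + 1) * ((2 * KK k + 3) * (n + 1))" by (rule mult_le_mono2)
      have B: "(n + 1) * ((2 * KK k + 3) * (n + 1)) = (2 * KK k + 3) * ((n + 1) * (n + 1))" by (simp only: ac_simps)
      have C: "n + 1 \<le> 3 * ((n + 1) * (n + 1))" by simp
      have D: "(2 * KK k + 3) * ((n + 1) * (n + 1)) + 3 * ((n + 1) * (n + 1)) = (2 * KK k + 6) * ((n + 1) * (n + 1))"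
        by (simp add: algebra_simps)
      have "n + 1 + (n + 1) * (2 * T + 3) \<le> (2 * KK k + 6) * ((n + 1) * (n + 1))"
        using A B C D by linarith
      moreover have "n * (2 * T + 3) \<le> (n + 1) * (2 * T + 3)" by simp
      ultimately have "n + 1 + n * (2 * T + 3) \<le> (2 * KK k + 6) * ((n + 1) * (n + 1))" by linarith
      then show ?thesis using n unfolding n_def by (simp add: power2_eq_square)
    qed
    ultimately show ?thesis using C ch csc by (intro exI[of _ C]) (auto intro: reach_mono)
  qed
  then show ?thesis unfolding reach_le_def run_eq by blast
qed



abbreviation CC :: "nat \<Rightarrow> nat \<Rightarrow> bool list \<Rightarrow> bool list" where
  "CC k d xs \<equiv> concat (chunks k d xs)"

abbreviation pairs :: "bool list \<Rightarrow> bool list" where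
  "pairs s \<equiv> concat (map (\<lambda>b. [True, b]) s)"

lemma chunks_app: "chunks k d (xs @ ys) = chunks k d xs @ chunks k (tr_st d xs) ys"
  by (induction xs arbitrary: d) auto

lemma P1: "d = 1 \<or> d = 4 \<or> d = 7 \<or> d = 10 \<Longrightarrow> CC k d (pairs s @ ys) = pairs s @ CC k d ys"
  by (induction s) (auto simp: outp_def tr_def)

lemma enc_bits_eq: "enc_bits s = pairs s @ [False]"
  unfolding enc_bits_def by simp

lemma bits_sign: "CC k 1 (enc_bits s @ ys) = enc_bits (s @ [False]) @ CC k 3 ys"
  unfolding enc_bits_eq using P1[of 1 k s "False # ys"] by (simp add: outp_def tr_def)

lemma nat_el: "d = 4 \<or> d = 7 \<or> d = 10 \<Longrightarrow> CC k d (enc_nat x @ ys) = enc_nat x @ CC k (d - 1) ys"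
  unfolding enc_nat_def enc_bits_eq using P1[of d k "bin x" "False # ys"] by (auto simp: outp_def tr_def)

lemma bin_r: "bin (r x) = True # bin x"
  unfolding r_def by (subst bin.simps) simp

lemma enc_nat_r: "enc_nat (r x) = True # True # enc_nat x"
  unfolding enc_nat_def bin_r enc_bits_def by simp

lemma enc_nat0: "enc_nat 0 = [False]"
  unfolding enc_nat_def enc_bits_def by (subst bin.simps) simp

lemma var_el: "CC k 3 (True # enc_nat x @ ys) = True # enc_nat (r x) @ CC k 3 ys"
  using nat_el[of 4 k x ys] by (simp add: outp_def tr_def enc_nat_r)

lemma var_list0: "CC k 3 (concat (map (\<lambda>x. True # enc_nat x) xs) @ ys)
   = concat (map (\<lambda>x. True # enc_nat x) (map r xs)) @ CC k 3 ys"
proof (induction xs)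
  case Nil then show ?case by simp
next
  case (Cons x xs)
  then show ?case using var_el[of k x "concat (map (\<lambda>x. True # enc_nat x) xs) @ ys"] by simp
qed

lemma var_list: "CC k 3 (enc_list enc_nat xs @ ys) = enc_list enc_nat (map r xs @ [0]) @ CC k 0 ys"
  unfolding enc_list_def using var_list0[of k xs "False # ys"]
  by (simp add: outp_def tr_def enc_nat0)

definition g_c :: "constr \<Rightarrow> constr" where
  "g_c c = (fst c @ [False], map r (snd c) @ [0])"

definition gI :: "nat \<Rightarrow> inst \<Rightarrow> inst" where
  "gI k I = (map g_c (fst I) @ [extra k], map r (fst (snd I)) @ [2], map r (snd (snd I)) @ [2])"

lemma constr_el: "CC k 0 (True # enc_constr c @ ys) = True # enc_constr (g_c c) @ CC k 0 ys"
proof -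
  have "CC k 0 (True # enc_constr c @ ys) = True # CC k 1 (enc_bits (fst c) @ enc_list enc_nat (snd c) @ ys)"
    unfolding enc_constr_def by (simp add: outp_def tr_def)
  also have "\<dots> = True # enc_bits (fst c @ [False]) @ enc_list enc_nat (map r (snd c) @ [0]) @ CC k 0 ys"
    using bits_sign[of k "fst c" "enc_list enc_nat (snd c) @ ys"] var_list[of k "snd c" ys] by simp
  finally show ?thesis unfolding enc_constr_def g_c_def by simp
qed

lemma kb_list0: "CC k 0 (concat (map (\<lambda>x. True # enc_constr x) cs) @ ys)
   = concat (map (\<lambda>x. True # enc_constr x) (map g_c cs)) @ CC k 0 ys"
proof (induction cs)
  case Nil then show ?case by simp
next
  case (Cons c cs)
  then show ?case using constr_el[of k c "concat (map (\<lambda>x. True # enc_constr x) cs) @ ys"] by simp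
qed

lemma kb_list: "CC k 0 (enc_list enc_constr cs @ ys) = enc_list enc_constr (map g_c cs @ [extra k]) @ CC k 6 ys"
  unfolding enc_list_def using kb_list0[of k cs "False # ys"]
  by (simp add: outp_def tr_def)

lemma h_el: "d = 6 \<or> d = 9 \<Longrightarrow> CC k d (True # enc_nat x @ ys) = True # enc_nat (r x) @ CC k d ys"
  using nat_el[of "d + 1" k x ys] by (auto simp: outp_def tr_def enc_nat_r)

lemma h_list0: "d = 6 \<or> d = 9 \<Longrightarrow> CC k d (concat (map (\<lambda>x. True # enc_nat x) xs) @ ys)
   = concat (map (\<lambda>x. True # enc_nat x) (map r xs)) @ CC k d ys"
proof (induction xs)
  case Nil then show ?case by simp
next
  case (Cons x xs)
  then show ?case using h_el[of d k x "concat (map (\<lambda>x. True # enc_nat x) xs) @ ys"] by simp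
qed

lemma h_list: "d = 6 \<or> d = 9 \<Longrightarrow> CC k d (enc_list enc_nat xs @ ys) = enc_list enc_nat (map r xs @ [2]) @ CC k (d + 3) ys"
  unfolding enc_list_def using h_list0[of d k xs "False # ys"]
  by (auto simp: outp_def tr_def)

lemma CC_inst: "CC k 0 (enc_inst I) = enc_inst (gI k I)"
proof -
  have "CC k 0 (enc_inst I) = enc_list enc_constr (map g_c (fst I) @ [extra k]) @
     CC k 6 (enc_list enc_nat (fst (snd I)) @ enc_list enc_nat (snd (snd I)))"
    unfolding enc_inst_def by (simp add: kb_list)
  also have "\<dots> = enc_list enc_constr (map g_c (fst I) @ [extra k]) @ enc_list enc_nat (map r (fst (snd I)) @ [2]) @
     CC k 9 (enc_list enc_nat (snd (snd I)) @ [])"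
    using h_list[of 6 k] by simp
  also have "\<dots> = enc_list enc_constr (map g_c (fst I) @ [extra k]) @ enc_list enc_nat (map r (fst (snd I)) @ [2]) @
     enc_list enc_nat (map r (snd (snd I)) @ [2])"
    using h_list[of 9 k "snd (snd I)" "[]"] by simp
  finally show ?thesis unfolding enc_inst_def gI_def by simp
qed

lemma enc_inst_ne: "enc_inst I \<noteq> []"
  unfolding enc_inst_def enc_list_def by simp



definition push :: "(nat \<Rightarrow> bool) \<Rightarrow> nat \<Rightarrow> bool" where
  "push \<sigma> y = (if odd y then \<sigma> (y div 2) else y = 2)"

lemma push_r[simp]: "push \<sigma> (r x) = \<sigma> x" unfolding push_def r_def by simp
lemma push_0[simp]: "push \<sigma> 0 = False" unfolding push_def by simp
lemma push_2[simp]: "push \<sigma> 2 = True" unfolding push_def by simp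
lemma push_comp: "push \<sigma> \<circ> r = \<sigma>" by (rule ext) simp
lemma r_ne2[simp]: "r x \<noteq> 2" "r x \<noteq> 0" unfolding r_def by presburger+
lemma r_inj[simp]: "(r x = r y) = (x = y)" unfolding r_def by simp

lemma clause_equiv:
  assumes "length xs = length s" "\<sigma>' 0 = False"
  shows "holds rel_NAE \<sigma>' (g_c (s, xs)) = holds rel_CNF (\<sigma>' \<circ> r) (s, xs)"
  using assms by (auto simp: holds_def rel_NAE_def rel_CNF_def g_c_def zero_s_def one_s_def)

lemma extra_equiv:
  assumes "1 \<le> k"
  shows "holds rel_NAE \<sigma>' (extra k) = (\<sigma>' 0 \<noteq> \<sigma>' 2)"
proof -
  obtain k' where k: "k = Suc k'" using assms by (cases k) auto
  have e1: "(replicate k' a @ [b] = replicate k' c @ [d]) = (b = d \<and> (k' = 0 \<or> a = c))" for a b c d :: bool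
    by (induction k') auto
  show ?thesis
    unfolding holds_def rel_NAE_def extra_def zero_s_def one_s_def k
    using e1[of "\<sigma>' 0" "\<sigma>' 0" "\<sigma>' 2" False] e1[of "\<sigma>' 0" "\<sigma>' 0" "\<sigma>' 2" True]
    by (cases "\<sigma>' 0"; cases "\<sigma>' 2") (auto simp: replicate_append_same[symmetric])
qed

lemma models_g:
  assumes "wf_inst k I" "1 \<le> k"
  shows "models rel_NAE \<sigma>' (fst (gI k I)) =
     (\<sigma>' 0 \<noteq> \<sigma>' 2 \<and> (\<forall>c\<in>set (fst I). holds rel_NAE \<sigma>' (g_c c)))"
  using extra_equiv[OF assms(2)] unfolding models_def gI_def by auto

lemma models_g0:
  assumes "wf_inst k I" "1 \<le> k" "\<sigma>' 0 = False"
  shows "models rel_NAE \<sigma>' (fst (gI k I)) = (\<sigma>' 2 \<and> models rel_CNF (\<sigma>' \<circ> r) (fst I))"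
proof -
  have "\<forall>c\<in>set (fst I). holds rel_NAE \<sigma>' (g_c c) = holds rel_CNF (\<sigma>' \<circ> r) c"
  proof
    fix c assume "c \<in> set (fst I)"
    then have "length (snd c) = length (fst c)" using assms(1) unfolding wf_inst_def by auto
    then show "holds rel_NAE \<sigma>' (g_c c) = holds rel_CNF (\<sigma>' \<circ> r) c"
      using clause_equiv[of "snd c" "fst c" \<sigma>'] assms(3) by (cases c) auto
  qed
  then show ?thesis using models_g[OF assms(1,2)] assms(3) unfolding models_def by auto
qed

lemma models_g_ne:
  assumes "wf_inst k I" "1 \<le> k" "models rel_NAE \<sigma>' (fst (gI k I))"
  shows "\<sigma>' 0 \<noteq> \<sigma>' 2"
  using models_g[OF assms(1,2)] assms(3) by auto

definition mapE :: "(nat \<times> bool) set \<Rightarrow> (nat \<times> bool) set" where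
  "mapE E = (\<lambda>(x, b). (r x, b)) ` E \<union> {(2, True)}"

definition pullE :: "(nat \<times> bool) set \<Rightarrow> (nat \<times> bool) set" where
  "pullE E' = {(x, b). (r x, b) \<in> E'}"

lemma lits_mapE: "lits_true \<sigma>' (mapE E) = (\<sigma>' 2 \<and> lits_true (\<sigma>' \<circ> r) E)"
  unfolding lits_true_def mapE_def by auto

lemma lits_pullE: "lits_true (\<sigma>' \<circ> r) (pullE E') = (\<forall>(y, b) \<in> E'. (\<exists>x. y = r x) \<longrightarrow> \<sigma>' y = b)"
  unfolding lits_true_def pullE_def by auto

lemma fwd:
  assumes wf: "wf_inst k I" "1 \<le> k" and ex: "explains rel_CNF I E"
  shows "explains rel_NAE (gI k I) (mapE E)"
proof -
  from ex obtain \<sigma> where s: "models rel_CNF \<sigma> (fst I)" "lits_true \<sigma> E"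
    unfolding explains_def by auto
  have c1: "models rel_NAE (push \<sigma>) (fst (gI k I)) \<and> lits_true (push \<sigma>) (mapE E)"
    using s models_g0[OF wf, of "push \<sigma>"] lits_mapE[of "push \<sigma>" E] push_comp[of \<sigma>] by simp
  have c2: "\<forall>m\<in>set (snd (snd (gI k I))). \<sigma>' m"
    if "models rel_NAE \<sigma>' (fst (gI k I))" "lits_true \<sigma>' (mapE E)" for \<sigma>'
  proof -
    have t2: "\<sigma>' 2" and l: "lits_true (\<sigma>' \<circ> r) E" using that(2) lits_mapE by auto
    have z: "\<sigma>' 0 = False" using models_g_ne[OF wf that(1)] t2 by auto
    have "models rel_CNF (\<sigma>' \<circ> r) (fst I)" using models_g0[OF wf, of "\<sigma>'"] z that(1) by simp
    then have "\<forall>m\<in>set (snd (snd I)). (\<sigma>' \<circ> r) m" using ex l unfolding explains_def by blast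
    then show ?thesis using t2 unfolding gI_def by auto
  qed
  show ?thesis unfolding explains_def using c1 c2 by blast
qed

lemma bwd:
  assumes wf: "wf_inst k I" "1 \<le> k" and ex: "explains rel_NAE (gI k I) E'"
    and sub: "E' \<subseteq> {(x, b). x \<in> set (fst (snd (gI k I)))}"
  shows "explains rel_CNF I (pullE E')"
proof -
  have ent: "\<forall>m\<in>set (snd (snd (gI k I))). \<sigma>' m"
    if "models rel_NAE \<sigma>' (fst (gI k I))" "lits_true \<sigma>' E'" for \<sigma>'
    using ex that unfolding explains_def by blast
  from ex obtain \<sigma>0 where s0: "models rel_NAE \<sigma>0 (fst (gI k I))" "lits_true \<sigma>0 E'"
    unfolding explains_def by auto
  have t2: "\<sigma>0 2" using ent[OF s0] unfolding gI_def by auto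
  have z: "\<sigma>0 0 = False" using models_g_ne[OF wf s0(1)] t2 by auto
  have no2F: "(2, False) \<notin> E'"
    using s0(2) t2 unfolding lits_true_def by auto
  have c1: "models rel_CNF (\<sigma>0 \<circ> r) (fst I) \<and> lits_true (\<sigma>0 \<circ> r) (pullE E')"
    using models_g0[OF wf, of \<sigma>0] z s0 lits_pullE[of \<sigma>0 E'] unfolding lits_true_def by auto
  have c2: "\<forall>m\<in>set (snd (snd I)). \<sigma> m"
    if "models rel_CNF \<sigma> (fst I)" "lits_true \<sigma> (pullE E')" for \<sigma>
  proof -
    have m: "models rel_NAE (push \<sigma>) (fst (gI k I))"
      using models_g0[OF wf, of "push \<sigma>"] that(1) push_comp[of \<sigma>] by simp
    have l: "lits_true (push \<sigma>) E'"
      unfolding lits_true_def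
    proof (intro ballI, clarify)
      fix y b assume yb: "(y, b) \<in> E'"
      then have "y \<in> set (fst (snd (gI k I)))" using sub by auto
      then have "y = 2 \<or> (\<exists>x. y = r x)" unfolding gI_def by auto
      then show "push \<sigma> y = b"
      proof
        assume "y = 2" then show ?thesis using yb no2F by (cases b) auto
      next
        assume "\<exists>x. y = r x"
        then obtain x where "y = r x" by blast
        then show ?thesis using that(2) yb unfolding lits_true_def pullE_def by auto
      qed
    qed
    have "\<forall>m\<in>set (snd (snd (gI k I))). push \<sigma> m" using ent[OF m l] .
    then show ?thesis unfolding gI_def by auto
  qed
  show ?thesis unfolding explains_def using c1 c2 by blast
qed

lemma abd_equiv:
  assumes "wf_inst k I" "1 \<le> k"
  shows "ABD rel_CNF I = ABD rel_NAE (gI k I)" "P_ABD rel_CNF I = P_ABD rel_NAE (gI k I)"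
proof -
  show "ABD rel_CNF I = ABD rel_NAE (gI k I)"
  proof
    assume "ABD rel_CNF I"
    then obtain E where E: "E \<subseteq> {(x, b). x \<in> set (fst (snd I))}" "explains rel_CNF I E" unfolding ABD_def by auto
    have "mapE E \<subseteq> {(x, b). x \<in> set (fst (snd (gI k I)))}" using E(1) unfolding mapE_def gI_def by auto
    then show "ABD rel_NAE (gI k I)" using fwd[OF assms E(2)] unfolding ABD_def by blast
  next
    assume "ABD rel_NAE (gI k I)"
    then obtain E where E: "E \<subseteq> {(x, b). x \<in> set (fst (snd (gI k I)))}" "explains rel_NAE (gI k I) E" unfolding ABD_def by auto
    have "pullE E \<subseteq> {(x, b). x \<in> set (fst (snd I))}" using E(1) unfolding pullE_def gI_def by auto
    then show "ABD rel_CNF I" using bwd[OF assms E(2) E(1)] unfolding ABD_def by blast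
  qed
  show "P_ABD rel_CNF I = P_ABD rel_NAE (gI k I)"
  proof
    assume "P_ABD rel_CNF I"
    then obtain E where E: "E \<subseteq> {(x, True) | x. x \<in> set (fst (snd I))}" "explains rel_CNF I E" unfolding P_ABD_def by auto
    have "mapE E \<subseteq> {(x, True) | x. x \<in> set (fst (snd (gI k I)))}" using E(1) unfolding mapE_def gI_def by auto
    then show "P_ABD rel_NAE (gI k I)" using fwd[OF assms E(2)] unfolding P_ABD_def by blast
  next
    assume "P_ABD rel_NAE (gI k I)"
    then obtain E where E: "E \<subseteq> {(x, True) | x. x \<in> set (fst (snd (gI k I)))}" "explains rel_NAE (gI k I) E" unfolding P_ABD_def by auto
    have E1: "E \<subseteq> {(x, b). x \<in> set (fst (snd (gI k I)))}" using E(1) by auto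
    have "pullE E \<subseteq> {(x, True) | x. x \<in> set (fst (snd I))}" using E(1) unfolding pullE_def gI_def by auto
    then show "P_ABD rel_CNF I" using bwd[OF assms E(2) E1] unfolding P_ABD_def by blast
  qed
qed

lemma wf_g: "wf_inst k I \<Longrightarrow> wf_inst (k + 1) (gI k I)"
  unfolding wf_inst_def gI_def g_c_def extra_def by auto

lemma vars_g: "vars (gI k I) \<subseteq> r ` vars I \<union> {0, 2}"
  unfolding vars_def gI_def g_c_def extra_def by (auto split: if_splits)

lemma card_g: "card (vars (gI k I)) \<le> card (vars I) + 2"
proof -
  have fin: "finite (vars I)" unfolding vars_def by auto
  have "card (vars (gI k I)) \<le> card (r ` vars I \<union> {0, 2})"
    using vars_g fin by (intro card_mono) auto
  also have "\<dots> \<le> card (r ` vars I) + card {0::nat, 2}" by (rule card_Un_le)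
  also have "\<dots> \<le> card (vars I) + 2" using card_image_le[OF fin, of r] by simp
  finally show ?thesis .
qed

lemma poly_g: "poly_time_on (enc_inst ` {I. wf_inst k I}) (CC k 0)"
  unfolding poly_time_on_def
proof (intro exI conjI)
  show "wf_tm (MM k)" by (rule wf_MM)
  show "\<forall>x\<in>enc_inst ` {I. wf_inst k I}. \<exists>t\<le>(2 * KK k + 6) * (length x + 1) ^ 2.
      fst (run (MM k) t x) = 1 \<and> tape_output (run (MM k) t x) = CC k 0 x"
    using tm_main enc_inst_ne by blast
qed

theorem theorem29:
  fixes k :: nat
  assumes "1 \<le> k"
  shows "cv_reduces (wf_inst k) (ABD rel_CNF) (wf_inst (k + 1)) (ABD rel_NAE) \<and>
         cv_reduces (wf_inst k) (P_ABD rel_CNF) (wf_inst (k + 1)) (P_ABD rel_NAE)"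
  unfolding cv_reduces_def
  using poly_g[of k] CC_inst[of k] wf_g[of k] abd_equiv[OF _ assms] card_g[of k]
  by (intro conjI exI[of _ "gI k"] exI[of _ 2] exI[of _ "CC k 0"]) auto

end
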